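(* Let $U$ be the subalgebra of the $q$-shuffle algebra $(\mathbb V,\star)$ generated by $x$ and $y$. Then every alternating word of $\mathbb V$ is contained in $U$. Here a word $v_1v_2\cdots v_n$ is alternating if $n\ge 1$ and $v_{i-1}\ne v_i$ for $2\le i\le n$.
   Context: Let $\mathbb F$ be a field and let $q\in\mathbb F$ be nonzero and not a root of unity. Let $\mathbb V$ be the free associative $\mathbb F$-algebra on noncommuting generators $x,y$. Its words (products of letters $x,y$, including the empty word $1$) form a basis. Set $\langle x,x\rangle=\langle y,y\rangle=2$ and $\langle x,y\rangle=\langle y,x\rangle=-2$. The $q$-shuffle product $\star$ on $\mathbb V$ is the bilinear product determined as follows: - $1\star v=v\star 1=v$; - for nontrivial words $u=u_1\cdots u_r$ and $v=v_1\cdots v_s$ (letters $u_i,v_j$; juxtaposition is concatenation), $$u\star v=u_1\big((u_2\cdots u_r)\star v\big)+v_1\big(u\star (v_2\cdots v_s)\big)q^{\langle u_1,v_1\rangle+\cdots+\langle u_r,v_1\rangle}.$$ This makes $\mathbb V$ an associative algebra, the $q$-shuffle algebra. *)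

theory Defs
  imports Main "HOL-Library.Poly_Mapping"
begin

datatype letter = X | Y

type_synonym word = "letter list"

type_synonym 'a V = "word \<Rightarrow>\<^sub>0 'a"

fun pairing :: "letter \<Rightarrow> letter \<Rightarrow> int" where
  "pairing a b = (if a = b then 2 else -2)"

definition wvec :: "word \<Rightarrow> 'a::field V" where
  "wvec w = Poly_Mapping.single w 1"

definition scal :: "'a::field \<Rightarrow> 'a V \<Rightarrow> 'a V" where
  "scal c p = Poly_Mapping.map (\<lambda>t. c * t) p"

definition prefix :: "letter \<Rightarrow> 'a::field V \<Rightarrow> 'a V" where
  "prefix a p = (\<Sum>w\<in>Poly_Mapping.keys p. Poly_Mapping.single (a # w) (Poly_Mapping.lookup p w))"

function wshuffle :: "'a::field \<Rightarrow> word \<Rightarrow> word \<Rightarrow> 'a V" where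
  "wshuffle q [] v = wvec v"
| "wshuffle q (a # u) [] = wvec (a # u)"
| "wshuffle q (a # u) (b # v) =
     prefix a (wshuffle q u (b # v))
     + scal (q powi (\<Sum>c\<leftarrow>a # u. pairing c b)) (prefix b (wshuffle q (a # u) v))"
  by pat_completeness auto
termination by (relation "measure (\<lambda>(_, u, v). length u + length v)") auto

definition qstar :: "'a::field \<Rightarrow> 'a V \<Rightarrow> 'a V \<Rightarrow> 'a V" where
  "qstar q f g = (\<Sum>u\<in>Poly_Mapping.keys f. \<Sum>v\<in>Poly_Mapping.keys g.
       scal (Poly_Mapping.lookup f u * Poly_Mapping.lookup g v) (wshuffle q u v))"

inductive_set gen_subalg :: "'a::field \<Rightarrow> 'a V set" for q where
  one: "wvec [] \<in> gen_subalg q"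
| gx: "wvec [X] \<in> gen_subalg q"
| gy: "wvec [Y] \<in> gen_subalg q"
| add: "f \<in> gen_subalg q \<Longrightarrow> g \<in> gen_subalg q \<Longrightarrow> f + g \<in> gen_subalg q"
| smul: "f \<in> gen_subalg q \<Longrightarrow> scal c f \<in> gen_subalg q"
| mult: "f \<in> gen_subalg q \<Longrightarrow> g \<in> gen_subalg q \<Longrightarrow> qstar q f g \<in> gen_subalg q"

definition alternating :: "word \<Rightarrow> bool" where
  "alternating w \<longleftrightarrow> length w \<ge> 1 \<and> (\<forall>i. 1 \<le> i \<and> i < length w \<longrightarrow> w ! (i - 1) \<noteq> w ! i)"

end

theory Submission
  imports Defs
begin

lemma lookup_scal [simp]: "Poly_Mapping.lookup (scal c p) w = c * Poly_Mapping.lookup p w"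
  by (simp add: scal_def Poly_Mapping.map.rep_eq when_def)

lemma lookup_wvec [simp]: "Poly_Mapping.lookup (wvec u :: 'a::field V) w = (if w = u then 1 else 0)"
  by (simp add: wvec_def lookup_single when_def)

lemma lookup_prefix_nil [simp]: "Poly_Mapping.lookup (prefix b p) [] = 0"
  by (simp add: prefix_def lookup_sum lookup_single when_def)

lemma lookup_prefix_cons [simp]:
  "Poly_Mapping.lookup (prefix b p) (a # w) = (if b = a then Poly_Mapping.lookup p w else 0)"
proof -
  have "Poly_Mapping.lookup (prefix b p) (a # w) =
     (\<Sum>v\<in>Poly_Mapping.keys p. (if b = a \<and> v = w then Poly_Mapping.lookup p v else 0))"
    by (simp add: prefix_def lookup_sum lookup_single when_def; intro sum.cong; auto)
  also have "\<dots> = (if b = a then Poly_Mapping.lookup p w else 0)"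
    by (cases "w \<in> Poly_Mapping.keys p") (auto simp: sum.delta in_keys_iff)
  finally show ?thesis .
qed

definition psum :: "word \<Rightarrow> letter \<Rightarrow> int" where
  "psum u b = (\<Sum>c\<leftarrow>u. pairing c b)"

abbreviation sh :: "'a::field \<Rightarrow> word \<Rightarrow> word \<Rightarrow> word \<Rightarrow> 'a" where
  "sh q u v w \<equiv> Poly_Mapping.lookup (wshuffle q u v) w"

lemma wshuffle_Nil2 [simp]: "wshuffle q u [] = wvec u"
  by (cases u) auto

lemma sh_nil: "sh q u v [] = (if u = [] \<and> v = [] then 1 else 0)"
  by (cases "(q,u,v)" rule: wshuffle.cases) (auto simp: lookup_add)

lemma sh_cons: "sh q u v (a # w) =
   (case u of [] \<Rightarrow> 0 | b # u' \<Rightarrow> if b = a then sh q u' v w else 0)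
 + (case v of [] \<Rightarrow> 0 | b # v' \<Rightarrow> if b = a then q powi psum u a * sh q u v' w else 0)"
  by (cases "(q,u,v)" rule: wshuffle.cases) (auto simp: lookup_add psum_def split: list.split)

fun oth :: "letter \<Rightarrow> letter" where
  "oth X = Y" | "oth Y = X"

lemma oth_oth [simp]: "oth (oth a) = a" by (cases a) auto
lemma oth_neq [simp]: "oth a \<noteq> a" "a \<noteq> oth a" by (cases a, auto)+
lemma letter_other: "c \<noteq> a \<Longrightarrow> c = oth a" by (cases a; cases c) auto

fun altw :: "letter \<Rightarrow> nat \<Rightarrow> word" where
  "altw a 0 = []" | "altw a (Suc n) = a # altw (oth a) n"

definition g :: "letter \<Rightarrow> nat \<Rightarrow> word" where "g a i = altw a (2 * i)"
definition wd :: "letter \<Rightarrow> nat \<Rightarrow> word" where "wd a i = altw a (Suc (2 * i))"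

lemma g_0 [simp]: "g a 0 = []" by (simp add: g_def)
lemma g_Suc: "g a (Suc i) = a # wd (oth a) i"
  by (simp add: g_def wd_def)
lemma wd_eq: "wd a i = a # g (oth a) i" by (simp add: g_def wd_def)

lemma g_eq_Nil [simp]: "g a i = [] \<longleftrightarrow> i = 0"
  by (cases i) (auto simp: g_Suc)
lemma wd_ne [simp]: "wd a i \<noteq> []" by (simp add: wd_eq)

declare wshuffle.simps [simp del]

lemma wshuffle_Nil1 [simp]: "wshuffle q [] v = wvec v" by (simp add: wshuffle.simps(1))

lemma psum_cons [simp]: "psum (x # u) c = pairing x c + psum u c"
  by (simp add: psum_def)
lemma psum_nil [simp]: "psum [] c = 0"
  by (simp add: psum_def)

lemma psum_g [simp]: "psum (g a i) c = 0"
proof (induction i arbitrary: a)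
  case 0 then show ?case by simp
next
  case (Suc i)
  have "g a (Suc i) = a # oth a # g a i" by (simp add: g_Suc wd_eq)
  then show ?case using Suc by (cases a; cases c) auto
qed

lemma psum_wd [simp]: "psum (wd a i) c = pairing a c"
  by (simp add: wd_eq)

lemma d1: "sh q (g a i) (g (oth a) j) (a # w) = (if i = 0 then 0 else sh q (wd (oth a) (i - 1)) (g (oth a) j) w)"
  by (cases i; cases j) (auto simp: sh_cons g_Suc wd_eq)

lemma d2: "sh q (g a i) (g (oth a) j) (oth a # w) = (if j = 0 then 0 else sh q (g a i) (wd a (j - 1)) w)"
  by (cases i; cases j) (auto simp: sh_cons g_Suc wd_eq)

lemma d3: "sh q (wd a i) (wd (oth a) j) (a # w) = sh q (g (oth a) i) (wd (oth a) j) w"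
  by (auto simp: sh_cons wd_eq)

lemma d4: "sh q (wd a i) (wd (oth a) j) (oth a # w) = inverse (q^2) * sh q (wd a i) (g a j) w"
  by (auto simp: sh_cons wd_eq power_int_minus)

lemma d5: "sh q (wd c i) (g c j) (c # w) = sh q (g (oth c) i) (g c j) w + (if j = 0 then 0 else q^2 * sh q (wd c i) (wd (oth c) (j - 1)) w)"
  by (cases j) (auto simp: sh_cons g_Suc wd_eq)

lemma d6: "sh q (g c i) (wd c j) (c # w) = (if i = 0 then 0 else sh q (wd (oth c) (i - 1)) (wd c j) w) + sh q (g c i) (g (oth c) j) w"
  by (cases i) (auto simp: sh_cons g_Suc wd_eq)

lemma d7: "sh q (wd c i) (g c j) (oth c # w) = 0"
  by (cases j) (auto simp: sh_cons g_Suc wd_eq)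

lemma d8: "sh q (g c i) (wd c j) (oth c # w) = 0"
  by (cases i) (auto simp: sh_cons g_Suc wd_eq)

definition GG :: "'a::field \<Rightarrow> nat \<Rightarrow> letter \<Rightarrow> word \<Rightarrow> 'a" where
  "GG q n a w = (\<Sum>i\<le>n. q^(2*i) * sh q (g a i) (g (oth a) (n - i)) w)"
definition TT :: "'a::field \<Rightarrow> nat \<Rightarrow> letter \<Rightarrow> word \<Rightarrow> 'a" where
  "TT q n a w = (\<Sum>i<n. q^(2*i) * sh q (wd a i) (wd (oth a) (n - 1 - i)) w)"
definition SA :: "'a::field \<Rightarrow> nat \<Rightarrow> letter \<Rightarrow> word \<Rightarrow> 'a" where
  "SA q n a w = GG q n a w - q^2 * TT q n a w"
definition SB1 :: "'a::field \<Rightarrow> nat \<Rightarrow> letter \<Rightarrow> word \<Rightarrow> 'a" where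
  "SB1 q n c w = (\<Sum>i\<le>n. q^(2*i) * sh q (wd c i) (g c (n - i)) w)"
definition SB2 :: "'a::field \<Rightarrow> nat \<Rightarrow> letter \<Rightarrow> word \<Rightarrow> 'a" where
  "SB2 q n c w = (\<Sum>i\<le>n. q^(2*i) * sh q (g c i) (wd c (n - i)) w)"

lemma SA_a: "SA q n a (a # w) = (case n of 0 \<Rightarrow> 0 | Suc m \<Rightarrow> q^2 * (SB1 q m (oth a) w - SB2 q m (oth a) w))"
proof (cases n)
  case 0 then show ?thesis by (simp add: SA_def GG_def TT_def d1)
next
  case (Suc m)
  have 1: "GG q n a (a # w) = q^2 * SB1 q m (oth a) w"
    unfolding GG_def SB1_def Suc d1
    by (simp add: sum.atMost_Suc_shift sum_distrib_left power_add mult_ac power2_eq_square del: sum.atMost_Suc)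
  have 2: "TT q n a (a # w) = SB2 q m (oth a) w"
    unfolding TT_def SB2_def Suc d3 by (simp add: lessThan_Suc_atMost)
  show ?thesis using 1 2 Suc by (simp add: SA_def algebra_simps)
qed

lemma SA_b: "SA q n a (oth a # w) = (case n of 0 \<Rightarrow> 0 | Suc m \<Rightarrow> SB2 q m a w - SB1 q m a w)"
  if q0: "q \<noteq> 0"
proof (cases n)
  case 0 then show ?thesis by (simp add: SA_def GG_def TT_def d2)
next
  case (Suc m)
  have 1: "GG q n a (oth a # w) = SB2 q m a w"
    unfolding GG_def SB2_def Suc d2
    by (simp add: Suc_diff_le)
  have 2: "q^2 * TT q n a (oth a # w) = SB1 q m a w"
    unfolding TT_def SB1_def Suc d4 using q0
    by (simp add: lessThan_Suc_atMost sum_distrib_left mult_ac, intro sum.cong, simp_all add: field_simps)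
  show ?thesis using 1 2 Suc by (simp add: SA_def algebra_simps)
qed

lemma SB_c: "SB1 q n c (c # w) - SB2 q n c (c # w) = SA q n (oth c) w - SA q n c w"
proof -
  have 1: "SB1 q n c (c # w) = GG q n (oth c) w + q^2 * TT q n c w"
  proof (cases n)
    case 0 then show ?thesis by (simp add: SB1_def GG_def TT_def d5 wd_eq)
  next
    case (Suc m)
    have "SB1 q n c (c # w) = GG q n (oth c) w +
       (\<Sum>i\<le>n. q^(2*i) * (if n - i = 0 then 0 else q^2 * sh q (wd c i) (wd (oth c) (n - i - 1)) w))"
      unfolding SB1_def GG_def d5 by (simp add: sum.distrib algebra_simps)
    also have "(\<Sum>i\<le>n. q^(2*i) * (if n - i = 0 then 0 else q^2 * sh q (wd c i) (wd (oth c) (n - i - 1)) w))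
       = q^2 * TT q n c w"
      unfolding TT_def Suc by (simp add: lessThan_Suc_atMost sum_distrib_left mult_ac)
    finally show ?thesis .
  qed
  have 2: "SB2 q n c (c # w) = q^2 * TT q n (oth c) w + GG q n c w"
  proof (cases n)
    case 0 then show ?thesis by (simp add: SB2_def GG_def TT_def d6 wd_eq)
  next
    case (Suc m)
    have "SB2 q n c (c # w) =
       (\<Sum>i\<le>n. q^(2*i) * (if i = 0 then 0 else sh q (wd (oth c) (i - 1)) (wd c (n - i)) w)) + GG q n c w"
      unfolding SB2_def GG_def d6 by (simp add: sum.distrib algebra_simps)
    also have "(\<Sum>i\<le>n. q^(2*i) * (if i = 0 then 0 else sh q (wd (oth c) (i - 1)) (wd c (n - i)) w))
       = q^2 * TT q n (oth c) w"
      unfolding TT_def Suc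
      by (simp add: sum.atMost_Suc_shift lessThan_Suc_atMost sum_distrib_left power_add mult_ac power2_eq_square del: sum.atMost_Suc)
    finally show ?thesis .
  qed
  show ?thesis using 1 2 by (simp add: SA_def algebra_simps)
qed

lemma SB_d: "SB1 q n c (oth c # w) = 0" "SB2 q n c (oth c # w) = 0"
  by (simp_all add: SB1_def SB2_def d7 d8)

lemma SA_nil: "SA q n a [] = (if n = 0 then 1 else 0)"
proof -
  have "GG q n a [] = (\<Sum>i\<le>n. if i = 0 \<and> n = 0 then 1 else 0)"
    unfolding GG_def by (intro sum.cong) (auto simp: sh_nil)
  moreover have "TT q n a [] = 0" unfolding TT_def by (simp add: sh_nil)
  ultimately show ?thesis by (simp add: SA_def)
qed

lemma SB_nil: "SB1 q n c [] = 0" "SB2 q n c [] = 0"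
  by (simp_all add: SB1_def SB2_def sh_nil)

lemma AI:
  fixes q :: "'a::field" assumes q0: "q \<noteq> 0"
  shows "(\<forall>n a. SA q n a w = (if n = 0 \<and> w = [] then 1 else 0)) \<and> (\<forall>n c. SB1 q n c w = SB2 q n c w)"
proof (induction w)
  case Nil then show ?case by (simp add: SA_nil SB_nil)
next
  case (Cons c w)
  have A: "SA q n a (c # w) = 0" for n a
  proof (cases "c = a")
    case True then show ?thesis using Cons.IH by (simp add: SA_a split: nat.split)
  next
    case False then have "c = oth a" by (rule letter_other)
    then show ?thesis using Cons.IH q0 by (simp add: SA_b split: nat.split)
  qed
  have B: "SB1 q n d (c # w) = SB2 q n d (c # w)" for n d
  proof (cases "c = d")
    case True then show ?thesis using Cons.IH SB_c[of q n c w] by simp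
  next
    case False then have "c = oth d" by (rule letter_other)
    then show ?thesis by (simp add: SB_d)
  qed
  show ?case using A B by simp
qed

lemma EF:
  fixes q :: "'a::field" assumes q0: "q \<noteq> 0"
  shows "(\<forall>a i. q^2 * sh q [a] (wd (oth a) i) w - q^2 * sh q (wd (oth a) i) [a] w
            = (q^2 - 1) * ((if w = g a (Suc i) then 1 else 0) - (if w = g (oth a) (Suc i) then 1 else 0)))
       \<and> (\<forall>a i. sh q [a] (g a i) w - q^2 * sh q (g a i) [a] w = (1 - q^2) * (if w = wd a i then 1 else 0))"
proof (induction w)
  case Nil then show ?case by (simp add: sh_nil g_Suc wd_eq)
next
  case (Cons c w)
  have E: "q^2 * sh q [a] (wd (oth a) i) (c # w) - q^2 * sh q (wd (oth a) i) [a] (c # w)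
            = (q^2 - 1) * ((if c # w = g a (Suc i) then 1 else 0) - (if c # w = g (oth a) (Suc i) then 1 else 0))" for a i
  proof (cases "c = a")
    case True then show ?thesis using q0 by (simp add: sh_cons wd_eq g_Suc power_int_minus field_simps)
  next
    case False then have c: "c = oth a" by (rule letter_other)
    have "q^2 * sh q [a] (wd (oth a) i) (c # w) - q^2 * sh q (wd (oth a) i) [a] (c # w)
      = sh q [a] (g a i) w - q^2 * sh q (g a i) [a] w"
      using q0 c by (simp add: sh_cons wd_eq g_Suc power_int_minus field_simps)
    also have "\<dots> = (1 - q^2) * (if w = wd a i then 1 else 0)" using Cons.IH by blast
    finally show ?thesis using c by (simp add: g_Suc algebra_simps)
  qed
  have F: "sh q [a] (g a i) (c # w) - q^2 * sh q (g a i) [a] (c # w) = (1 - q^2) * (if c # w = wd a i then 1 else 0)" for a i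
  proof (cases "c = a")
    case True
    show ?thesis
    proof (cases i)
      case 0 then show ?thesis using True by (simp add: sh_cons wd_eq field_simps)
    next
      case (Suc j)
      have "sh q [a] (g a i) (c # w) - q^2 * sh q (g a i) [a] (c # w)
        = (1 - q^2) * (if w = g a i then 1 else 0) + (q^2 * sh q [a] (wd (oth a) j) w - q^2 * sh q (wd (oth a) j) [a] w)"
        using True Suc q0 by (simp add: sh_cons wd_eq g_Suc field_simps)
      also have "\<dots> = (1 - q^2) * (if w = g a i then 1 else 0) + (q^2 - 1) * ((if w = g a (Suc j) then 1 else 0) - (if w = g (oth a) (Suc j) then 1 else 0))"
        using Cons.IH by simp
      finally show ?thesis using True Suc by (simp add: wd_eq g_Suc algebra_simps)
    qed
  next
    case False then have c: "c = oth a" by (rule letter_other)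
    then show ?thesis by (cases i) (simp_all add: sh_cons wd_eq g_Suc)
  qed
  show ?case using E F by blast
qed


lemma scal_one [simp]: "scal 1 p = p"
  by (rule poly_mapping_eqI) simp

lemma scal_zero: "scal 0 p = 0"
  by (rule poly_mapping_eqI) simp

lemma qstar_wvec: "qstar q (wvec u) (wvec v) = wshuffle q u v"
  by (simp add: qstar_def wvec_def)

lemma U_wsh: "wvec u \<in> gen_subalg q \<Longrightarrow> wvec v \<in> gen_subalg q \<Longrightarrow> wshuffle q u v \<in> gen_subalg q"
  using gen_subalg.mult[of "wvec u" q "wvec v"] by (simp add: qstar_wvec)

lemma U_zero: "0 \<in> gen_subalg q"
  using gen_subalg.smul[OF gen_subalg.one, where c=0] by (simp add: scal_zero)

lemma U_diff: "f \<in> gen_subalg q \<Longrightarrow> h \<in> gen_subalg q \<Longrightarrow> f - h \<in> gen_subalg q"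
proof -
  assume "f \<in> gen_subalg q" "h \<in> gen_subalg q"
  then have "f + scal (-1) h \<in> gen_subalg q" by (intro gen_subalg.add gen_subalg.smul)
  moreover have "f + scal (-1) h = f - h" by (rule poly_mapping_eqI) (simp add: lookup_add lookup_minus)
  ultimately show ?thesis by simp
qed

lemma U_sum: "(\<And>i. i \<in> A \<Longrightarrow> f i \<in> gen_subalg q) \<Longrightarrow> sum f A \<in> gen_subalg q"
proof (induction A rule: infinite_finite_induct)
  case (infinite A) then show ?case by (simp add: U_zero)
next
  case empty then show ?case by (simp add: U_zero)
next
  case (insert x F) then show ?case by (simp add: gen_subalg.add)
qed

lemma U_letter: "wvec [a] \<in> gen_subalg q"
  by (cases a) (auto intro: gen_subalg.gx gen_subalg.gy)

lemma odd_step: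
  fixes q :: "'a::field" assumes q0: "q \<noteq> 0" and q2: "q^2 \<noteq> 1"
    and G: "wvec (g a k) \<in> gen_subalg q"
  shows "wvec (wd a k) \<in> gen_subalg q"
proof -
  let ?Z = "wshuffle q [a] (g a k) - scal (q^2) (wshuffle q (g a k) [a])"
  have Z: "?Z \<in> gen_subalg q"
    by (intro U_diff gen_subalg.smul U_wsh U_letter G)
  have "wvec (wd a k) = scal (1 / (1 - q^2)) ?Z"
  proof (rule poly_mapping_eqI)
    fix w
    have "sh q [a] (g a k) w - q^2 * sh q (g a k) [a] w = (1 - q^2) * (if w = wd a k then 1 else 0)"
      using EF[OF q0, of w] by blast
    moreover have "1 - q^2 \<noteq> 0" using q2 by simp
    ultimately show "Poly_Mapping.lookup (wvec (wd a k)) w = Poly_Mapping.lookup (scal (1 / (1 - q^2)) ?Z) w"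
      by (simp add: lookup_minus field_simps)
  qed
  then show ?thesis using Z gen_subalg.smul by metis
qed

lemma GG_split: "GG q (Suc m) a w = sh q [] (g (oth a) (Suc m)) w
   + (\<Sum>i<m. q^(2 * Suc i) * sh q (g a (Suc i)) (g (oth a) (m - i)) w)
   + q^(2 * Suc m) * sh q (g a (Suc m)) [] w"
proof -
  define f where "f i = q^(2*i) * sh q (g a i) (g (oth a) (Suc m - i)) w" for i
  have "GG q (Suc m) a w = f 0 + (\<Sum>i\<le>m. f (Suc i))"
    unfolding GG_def f_def by (simp only: sum.atMost_Suc_shift)
  also have "(\<Sum>i\<le>m. f (Suc i)) = (\<Sum>i<m. f (Suc i)) + f (Suc m)"
    by (simp only: lessThan_Suc_atMost[symmetric] sum.lessThan_Suc)
  finally show ?thesis by (simp add: f_def)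
qed

lemma even_step:
  fixes q :: "'a::field" assumes q0: "q \<noteq> 0" and q2: "q^2 \<noteq> 1"
    and qk: "q^(2 * Suc m) \<noteq> -1"
    and IHg: "\<And>c i. i \<le> m \<Longrightarrow> wvec (g c i) \<in> gen_subalg q"
    and IHw: "\<And>c i. i \<le> m \<Longrightarrow> wvec (wd c i) \<in> gen_subalg q"
  shows "wvec (g a (Suc m)) \<in> gen_subalg q"
proof -
  let ?b = "oth a"
  let ?Z1 = "scal (q^2) (\<Sum>i<Suc m. scal (q^(2*i)) (wshuffle q (wd a i) (wd ?b (Suc m - 1 - i))))
     - (\<Sum>i<m. scal (q^(2 * Suc i)) (wshuffle q (g a (Suc i)) (g ?b (m - i))))"
  let ?Z2 = "scal (q^2) (wshuffle q [a] (wd ?b m)) - scal (q^2) (wshuffle q (wd ?b m) [a])"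
  have Z1: "?Z1 \<in> gen_subalg q"
    by (intro U_diff gen_subalg.smul U_sum U_wsh IHg IHw) auto
  have Z2: "?Z2 \<in> gen_subalg q"
    by (intro U_diff gen_subalg.smul U_wsh IHw U_letter) auto
  have ne: "g a (Suc m) \<noteq> g ?b (Suc m)" by (simp add: g_Suc)
  have eq: "wvec (g a (Suc m)) = scal (1 / (1 + q^(2 * Suc m))) (?Z1 + scal (1 / (q^2 - 1)) ?Z2)"
  proof (rule poly_mapping_eqI)
    fix w
    have SA0: "SA q (Suc m) a w = 0" using AI[OF q0, of w] by auto
    have l1: "Poly_Mapping.lookup ?Z1 w = (if w = g ?b (Suc m) then 1 else 0) + q^(2 * Suc m) * (if w = g a (Suc m) then 1 else 0)"
      using SA0 unfolding SA_def GG_split TT_def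
      by (simp add: lookup_minus lookup_add lookup_sum sum_distrib_left algebra_simps)
    have l2: "Poly_Mapping.lookup ?Z2 w = (q^2 - 1) * ((if w = g a (Suc m) then 1 else 0) - (if w = g ?b (Suc m) then 1 else 0))"
      using EF[OF q0, of w] by (simp add: lookup_minus algebra_simps)
    have n1: "1 + q^(2 * Suc m) \<noteq> 0" using qk by (metis add_eq_0_iff)
    have n2: "q^2 - 1 \<noteq> 0" using q2 by simp
    define Q where "Q = q^(2 * Suc m)"
    define da :: 'a where "da = (if w = g a (Suc m) then 1 else 0)"
    define db :: 'a where "db = (if w = g ?b (Suc m) then 1 else 0)"
    have "Poly_Mapping.lookup (scal (1 / (1 + q^(2 * Suc m))) (?Z1 + scal (1 / (q^2 - 1)) ?Z2)) w
       = (1 / (1 + q^(2 * Suc m))) * (Poly_Mapping.lookup ?Z1 w + (1 / (q^2 - 1)) * Poly_Mapping.lookup ?Z2 w)"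
      by (simp only: lookup_scal lookup_add)
    also have "\<dots> = (1 / (1 + Q)) * ((db + Q * da) + (1 / (q^2 - 1)) * ((q^2 - 1) * (da - db)))"
      unfolding l1 l2 Q_def da_def db_def ..
    also have "\<dots> = (1 / (1 + Q)) * ((db + Q * da) + (da - db))"
      using n2 by simp
    also have "\<dots> = da"
      using n1 unfolding Q_def[symmetric] by (simp add: field_simps)
    finally show "Poly_Mapping.lookup (wvec (g a (Suc m))) w = Poly_Mapping.lookup (scal (1 / (1 + q^(2 * Suc m))) (?Z1 + scal (1 / (q^2 - 1)) ?Z2)) w"
      by (simp add: da_def)
  qed
  show ?thesis
    apply (subst eq)
    apply (rule gen_subalg.smul)
    apply (rule gen_subalg.add)
     apply (rule Z1)
    apply (rule gen_subalg.smul)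
    apply (rule Z2)
    done
qed

lemma alt_form: "w \<noteq> [] \<Longrightarrow> (\<forall>i. 1 \<le> i \<and> i < length w \<longrightarrow> w ! (i - 1) \<noteq> w ! i) \<Longrightarrow> w = altw (hd w) (length w)"
proof (induction w)
  case Nil then show ?case by simp
next
  case (Cons c r)
  show ?case
  proof (cases r)
    case Nil then show ?thesis by simp
  next
    case (Cons d r')
    have h: "\<forall>i. 1 \<le> i \<and> i < length r \<longrightarrow> r ! (i - 1) \<noteq> r ! i"
    proof (intro allI impI)
      fix i assume i: "1 \<le> i \<and> i < length r"
      have "1 \<le> Suc i \<and> Suc i < length (c # r)" using i by simp
      then have "(c # r) ! (Suc i - 1) \<noteq> (c # r) ! Suc i" using Cons.prems(2) by blast
      then show "r ! (i - 1) \<noteq> r ! i" using i by (cases i) auto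
    qed
    have "1 \<le> (1::nat) \<and> 1 < length (c # r)" using Cons by simp
    then have "(c # r) ! (1 - 1) \<noteq> (c # r) ! 1" using Cons.prems(2) by blast
    then have "d = oth c" using Cons by (auto intro: letter_other)
    then have "r = altw (oth c) (length r)" using Cons.IH h Cons by simp
    then show ?thesis by simp
  qed
qed

theorem theorem8p3:
  fixes q :: "'a::field"
  assumes "q \<noteq> 0"
    and "\<forall>n::nat. n \<ge> 1 \<longrightarrow> q ^ n \<noteq> 1"
    and "alternating w"
  shows "wvec w \<in> gen_subalg q"
proof -
  note q0 = assms(1)
  have q2: "q^2 \<noteq> 1" using assms(2) by auto
  have qk: "q^(2 * Suc m) \<noteq> -1" for m
  proof
    assume h: "q^(2 * Suc m) = -1"
    have "q^(2 * Suc m * 2) = (q^(2 * Suc m))^2" by (rule power_mult)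
    also have "\<dots> = 1" using h by simp
    finally have "q^(2 * Suc m * 2) = 1" .
    moreover have "2 * Suc m * 2 \<ge> 1" by simp
    ultimately show False using assms(2) by blast
  qed
  have P: "(\<forall>a. wvec (g a k) \<in> gen_subalg q) \<and> (\<forall>a. wvec (wd a k) \<in> gen_subalg q)" for k
  proof (induction k rule: less_induct)
    case (less k)
    have G: "wvec (g a k) \<in> gen_subalg q" for a
    proof (cases k)
      case 0 then show ?thesis by (simp add: gen_subalg.one)
    next
      case (Suc m)
      have IHg: "\<And>c i. i \<le> m \<Longrightarrow> wvec (g c i) \<in> gen_subalg q" using less Suc by auto
      have IHw: "\<And>c i. i \<le> m \<Longrightarrow> wvec (wd c i) \<in> gen_subalg q" using less Suc by auto
      show ?thesis unfolding Suc by (rule even_step[OF q0 q2 qk IHg IHw])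
    qed
    have W: "wvec (wd a k) \<in> gen_subalg q" for a
      by (rule odd_step[OF q0 q2 G])
    show ?case using G W by blast
  qed
  have wne: "w \<noteq> []" and hw: "\<forall>i. 1 \<le> i \<and> i < length w \<longrightarrow> w ! (i - 1) \<noteq> w ! i"
    using assms(3) unfolding alternating_def by auto
  have weq: "w = altw (hd w) (length w)" by (rule alt_form[OF wne hw])
  have split: "altw a n = g a (n div 2) \<or> altw a n = wd a (n div 2)" for a n
  proof (cases "even n")
    case True then have "n = 2 * (n div 2)" by simp
    then show ?thesis unfolding g_def by (metis)
  next
    case False then have "n = Suc (2 * (n div 2))" by presburger
    then show ?thesis unfolding wd_def by metis
  qed
  show ?thesis
  proof (cases "altw (hd w) (length w) = g (hd w) (length w div 2)")
    case True then show ?thesis using weq P by metis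
  next
    case False then have "altw (hd w) (length w) = wd (hd w) (length w div 2)" using split by blast
    then show ?thesis using weq P by metis
  qed
qed

end
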